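(* Let $(X,\leq)$ be a partially ordered set and suppose $d$ is a metric on $X$ such that $(X,d)$ is a complete metric space. Let $F:X\times X\to X$ be a continuous mapping having the mixed monotone property on $X$. Assume that for all $x,y,u,v\in X$ with $x\geq u$ and $y\leq v$, $$d\big(F(x,y),F(u,v)\big)\leq \delta(x,y,u,v)\,\big[d(x,u)+d(y,v)\big],$$ where $$\delta(x,y,u,v)=\frac{d(x,F(u,v))+d(y,F(v,u))+d(u,F(x,y))+d(v,F(y,x))}{1+2\big[d(x,F(x,y))+d(y,F(y,x))+d(u,F(u,v))+d(v,F(v,u))\big]}.$$ If there exist $x_0,y_0\in X$ such that $x_0\leq F(x_0,y_0)$ and $y_0\geq F(y_0,x_0)$, then $F$ has at least one coupled fixed point, i.e., there exist $x,y\in X$ with $x=F(x,y)$ and $y=F(y,x)$.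
   Context: A mapping $F:X\times X\to X$ on a partially ordered set $(X,\leq)$ has the mixed monotone property if $F(x,y)$ is monotone nondecreasing in $x$ and monotone nonincreasing in $y$: for all $x,y\in X$, $x_1\leq x_2$ implies $F(x_1,y)\leq F(x_2,y)$, and $y_1\leq y_2$ implies $F(x,y_1)\geq F(x,y_2)$. An element $(x,y)\in X\times X$ is a coupled fixed point of $F$ if $F(x,y)=x$ and $F(y,x)=y$. *)

theory Defs
  imports "HOL-Analysis.Analysis"
begin

definition mixed_monotone :: "('a::order \<Rightarrow> 'a \<Rightarrow> 'a) \<Rightarrow> bool" where
  "mixed_monotone F \<longleftrightarrow>
     (\<forall>x1 x2 y. x1 \<le> x2 \<longrightarrow> F x1 y \<le> F x2 y) \<and>
     (\<forall>x y1 y2. y1 \<le> y2 \<longrightarrow> F x y1 \<ge> F x y2)"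

definition coupled_fixed_point :: "('a \<Rightarrow> 'a \<Rightarrow> 'a) \<Rightarrow> 'a \<Rightarrow> 'a \<Rightarrow> bool" where
  "coupled_fixed_point F x y \<longleftrightarrow> F x y = x \<and> F y x = y"

end

theory Submission
  imports Defs
begin

lemma geo_cauchy:
  fixes z :: "nat \<Rightarrow> 'a::metric_space"
  assumes d: "\<And>n. dist (z n) (z (Suc n)) \<le> C * k^n" and k0: "0 \<le> k" and k1: "k < 1"
  shows "Cauchy z"
proof -
  have C0: "0 \<le> C" using order_trans[OF zero_le_dist d[of 0]] by simp
  have step: "dist (z m) (z (m+n)) \<le> C*k^m/(1-k) - C*k^(m+n)/(1-k)" for m n
  proof (induction n)
    case 0 then show ?case by simp
  next
    case (Suc n)
    have "dist (z m) (z (m + Suc n)) \<le> dist (z m) (z (m+n)) + dist (z (m+n)) (z (Suc (m+n)))"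
      by (simp add: dist_triangle)
    also have "\<dots> \<le> C*k^m/(1-k) - C*k^(m+n)/(1-k) + C*k^(m+n)"
      using Suc d[of "m+n"] by linarith
    also have "\<dots> = C*k^m/(1-k) - C*k^(m+Suc n)/(1-k)"
    proof -
      have q: "1 - k \<noteq> 0" using k1 by simp
      have e1: "1/(1-k) - 1 = k/(1-k)" using q by (simp add: divide_simps)
      have "C*k^(m+n)/(1-k) - C*k^(m+n) = C*k^(m+n)*(1/(1-k) - 1)" by (simp add: algebra_simps)
      also have "\<dots> = C*k^(m+Suc n)/(1-k)" unfolding e1 by simp
      finally have "C*k^(m+Suc n)/(1-k) = C*k^(m+n)/(1-k) - C*k^(m+n)" by linarith
      then show ?thesis by linarith
    qed
    finally show ?case .
  qed
  have bnd: "dist (z m) (z n) \<le> C*k^m/(1-k)" if mn: "m \<le> n" for m n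
  proof -
    obtain j where nj: "n = m + j" using le_Suc_ex[OF mn] by blast
    have pos: "0 \<le> C*k^(m+j)/(1-k)" using C0 k0 k1
      by (intro divide_nonneg_pos mult_nonneg_nonneg zero_le_power) auto
    show ?thesis unfolding nj using step[of m j] pos by linarith
  qed
  show ?thesis
    unfolding Cauchy_altdef
  proof (intro allI impI)
    fix e :: real assume e: "e > 0"
    obtain M where M: "k^M < e*(1-k)/(C+1)"
      using real_arch_pow_inv[of "e*(1-k)/(C+1)" k] e k1 C0 by auto
    show "\<exists>M. \<forall>m\<ge>M. \<forall>n>m. dist (z m) (z n) < e"
    proof (intro exI allI impI)
      fix m n assume mM: "m \<ge> M" and "n > m"
      have "dist (z m) (z n) \<le> C*k^m/(1-k)" using bnd \<open>n>m\<close> by simp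
      also have "\<dots> \<le> C*k^M/(1-k)"
        using power_decreasing[OF mM k0] k1 C0 less_imp_le[OF k1]
        by (intro divide_right_mono mult_left_mono) auto
      also have "\<dots> \<le> (C+1)*k^M/(1-k)"
        using k0 k1 by (intro divide_right_mono mult_right_mono) auto
      also have "\<dots> < (C+1)*(e*(1-k)/(C+1))/(1-k)"
        using M C0 k1 by (intro divide_strict_right_mono mult_strict_left_mono) auto
      also have "\<dots> = e" using C0 k1 by simp
      finally show "dist (z m) (z n) < e" .
    qed
  qed
qed

fun cseq :: "('a \<Rightarrow> 'a \<Rightarrow> 'a) \<Rightarrow> 'a \<Rightarrow> 'a \<Rightarrow> nat \<Rightarrow> 'a \<times> 'a" where
  "cseq F x y 0 = (x, y)"
| "cseq F x y (Suc n) = (F (fst (cseq F x y n)) (snd (cseq F x y n)), F (snd (cseq F x y n)) (fst (cseq F x y n)))"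

theorem theorem2p1:
  fixes F :: "'a::{order, complete_space} \<Rightarrow> 'a \<Rightarrow> 'a"
  assumes cont: "continuous_on UNIV (\<lambda>(x, y). F x y)"
    and mm: "mixed_monotone F"
    and contr: "\<And>x y u v. x \<ge> u \<Longrightarrow> y \<le> v \<Longrightarrow>
      dist (F x y) (F u v) \<le>
        ((dist x (F u v) + dist y (F v u) + dist u (F x y) + dist v (F y x)) /
         (1 + 2 * (dist x (F x y) + dist y (F y x) + dist u (F u v) + dist v (F v u))))
        * (dist x u + dist y v)"
    and init: "x0 \<le> F x0 y0" "y0 \<ge> F y0 x0"
  shows "\<exists>x y. coupled_fixed_point F x y"
proof -
  define xs where "xs n = fst (cseq F x0 y0 n)" for n
  define ys where "ys n = snd (cseq F x0 y0 n)" for n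
  have xs0: "xs 0 = x0" and ys0: "ys 0 = y0" by (simp_all add: xs_def ys_def)
  have xsS: "xs (Suc n) = F (xs n) (ys n)" and ysS: "ys (Suc n) = F (ys n) (xs n)" for n
    by (simp_all add: xs_def ys_def)
  have m1: "\<And>a b y. a \<le> b \<Longrightarrow> F a y \<le> F b y" and m2: "\<And>x a b. a \<le> b \<Longrightarrow> F x b \<le> F x a"
    using mm unfolding mixed_monotone_def by auto
  have mono: "xs n \<le> xs (Suc n) \<and> ys (Suc n) \<le> ys n" for n
  proof (induction n)
    case 0 then show ?case using init by (simp add: xs0 ys0 xsS ysS)
  next
    case (Suc n)
    have "F (xs n) (ys n) \<le> F (xs (Suc n)) (ys n)" using Suc by (intro m1) simp
    also have "\<dots> \<le> F (xs (Suc n)) (ys (Suc n))" using Suc by (intro m2) simp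
    finally have A: "xs (Suc n) \<le> xs (Suc (Suc n))" by (simp only: xsS)
    have "F (ys (Suc n)) (xs (Suc n)) \<le> F (ys n) (xs (Suc n))" using Suc by (intro m1) simp
    also have "\<dots> \<le> F (ys n) (xs n)" using Suc by (intro m2) simp
    finally have B: "ys (Suc (Suc n)) \<le> ys (Suc n)" by (simp only: ysS)
    show ?case using A B by simp
  qed
  define D where "D n = dist (xs n) (xs (Suc n)) + dist (ys n) (ys (Suc n))" for n
  have D0: "D n \<ge> 0" for n unfolding D_def by simp
  have key: "D (Suc n) \<le> (2 * (D n + D (Suc n)) / (1 + 2 * (D n + D (Suc n)))) * D n" for n
  proof -
    define S where "S = D n + D (Suc n)"
    define N where "N = dist (xs n) (xs (Suc (Suc n))) + dist (ys n) (ys (Suc (Suc n)))"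
    have NS: "N \<le> S" unfolding N_def S_def D_def
      using dist_triangle[of "xs n" "xs (Suc (Suc n))" "xs (Suc n)"]
        dist_triangle[of "ys n" "ys (Suc (Suc n))" "ys (Suc n)"] by linarith
    have S0: "S \<ge> 0" unfolding S_def using D0 by simp
    have h1: "dist (xs (Suc (Suc n))) (xs (Suc n)) \<le>
      (0 + 0 + dist (xs n) (xs (Suc (Suc n))) + dist (ys n) (ys (Suc (Suc n)))) /
      (1 + 2 * (dist (xs (Suc n)) (xs (Suc (Suc n))) + dist (ys (Suc n)) (ys (Suc (Suc n)))
         + dist (xs n) (xs (Suc n)) + dist (ys n) (ys (Suc n))))
      * (dist (xs (Suc n)) (xs n) + dist (ys (Suc n)) (ys n))"
      using contr[where x="xs (Suc n)" and y="ys (Suc n)" and u="xs n" and v="ys n"] mono[of n]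
      by (simp only: xsS ysS dist_self)
    have h2: "dist (ys (Suc n)) (ys (Suc (Suc n))) \<le>
      (dist (ys n) (ys (Suc (Suc n))) + dist (xs n) (xs (Suc (Suc n))) + 0 + 0) /
      (1 + 2 * (dist (ys n) (ys (Suc n)) + dist (xs n) (xs (Suc n))
         + dist (ys (Suc n)) (ys (Suc (Suc n))) + dist (xs (Suc n)) (xs (Suc (Suc n)))))
      * (dist (ys n) (ys (Suc n)) + dist (xs n) (xs (Suc n)))"
      using contr[where x="ys n" and y="xs n" and u="ys (Suc n)" and v="xs (Suc n)"] mono[of n]
      by (simp only: xsS ysS dist_self)
    have eS1: "1 + 2 * (dist (xs (Suc n)) (xs (Suc (Suc n))) + dist (ys (Suc n)) (ys (Suc (Suc n)))
         + dist (xs n) (xs (Suc n)) + dist (ys n) (ys (Suc n))) = 1 + 2*S"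
      unfolding S_def D_def by (simp add: ac_simps)
    have eS2: "1 + 2 * (dist (ys n) (ys (Suc n)) + dist (xs n) (xs (Suc n))
         + dist (ys (Suc n)) (ys (Suc (Suc n))) + dist (xs (Suc n)) (xs (Suc (Suc n)))) = 1 + 2*S"
      unfolding S_def D_def by (simp add: ac_simps)
    have eN1: "0 + 0 + dist (xs n) (xs (Suc (Suc n))) + dist (ys n) (ys (Suc (Suc n))) = N"
      unfolding N_def by (simp add: ac_simps)
    have eN2: "dist (ys n) (ys (Suc (Suc n))) + dist (xs n) (xs (Suc (Suc n))) + 0 + 0 = N"
      unfolding N_def by (simp add: ac_simps)
    have eD1: "dist (xs (Suc n)) (xs n) + dist (ys (Suc n)) (ys n) = D n"
      unfolding D_def by (simp only: dist_commute)
    have eD2: "dist (ys n) (ys (Suc n)) + dist (xs n) (xs (Suc n)) = D n"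
      unfolding D_def by (simp add: ac_simps)
    have c1: "dist (xs (Suc (Suc n))) (xs (Suc n)) \<le> N / (1 + 2*S) * D n"
      using h1 unfolding eS1 unfolding eN1 unfolding eD1 .
    have c2: "dist (ys (Suc n)) (ys (Suc (Suc n))) \<le> N / (1 + 2*S) * D n"
      using h2 unfolding eS2 unfolding eN2 unfolding eD2 .
    have "D (Suc n) \<le> 2 * (N / (1 + 2*S) * D n)"
      using c1 c2 unfolding D_def by (simp add: dist_commute)
    also have "\<dots> \<le> 2 * (S / (1 + 2*S) * D n)"
      using NS S0 D0[of n] by (intro mult_left_mono mult_right_mono divide_right_mono) auto
    also have "\<dots> = (2 * S / (1 + 2*S)) * D n" by simp
    finally show ?thesis unfolding S_def .
  qed
  have frac: "2 * w / (1 + 2 * w) \<le> 1" if "w \<ge> 0" for w :: real using that by simp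
  have Ddec: "D (Suc n) \<le> D n" for n
  proof -
    have "D (Suc n) \<le> (2 * (D n + D (Suc n)) / (1 + 2 * (D n + D (Suc n)))) * D n" by (rule key)
    also have "\<dots> \<le> 1 * D n"
      using frac[of "D n + D (Suc n)"] D0[of n] D0[of "Suc n"] by (intro mult_right_mono) auto
    finally show ?thesis by simp
  qed
  have Dle: "D n \<le> D 0" for n
    by (induction n) (auto intro: order_trans[OF Ddec])
  define k where "k = 4 * D 0 / (1 + 4 * D 0)"
  have k0: "0 \<le> k" and k1: "k < 1" unfolding k_def using D0[of 0] by auto
  have fmono: "2 * w / (1 + 2 * w) \<le> 2 * t / (1 + 2 * t)" if "0 \<le> w" "w \<le> t" for w t :: real
    using that by (simp add: field_simps)
  have Dk: "D (Suc n) \<le> k * D n" for n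
  proof -
    have "D (Suc n) \<le> (2 * (D n + D (Suc n)) / (1 + 2 * (D n + D (Suc n)))) * D n" by (rule key)
    also have "\<dots> \<le> (2 * (2 * D 0) / (1 + 2 * (2 * D 0))) * D n"
      using fmono[of "D n + D (Suc n)" "2 * D 0"] Dle[of n] Dle[of "Suc n"] D0[of n] D0[of "Suc n"]
      by (intro mult_right_mono) auto
    also have "\<dots> = k * D n" unfolding k_def by simp
    finally show ?thesis .
  qed
  have Dpow: "D n \<le> D 0 * k^n" for n
  proof (induction n)
    case 0 then show ?case by simp
  next
    case (Suc n)
    have "D (Suc n) \<le> k * D n" by (rule Dk)
    also have "\<dots> \<le> k * (D 0 * k^n)" using Suc k0 by (rule mult_left_mono)
    finally show ?case by (simp add: ac_simps)
  qed
  have "Cauchy xs"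
    by (rule geo_cauchy[OF _ k0 k1, of _ "D 0"])
       (use Dpow D_def in \<open>smt (verit) zero_le_dist\<close>)
  then obtain a where a: "xs \<longlonglongrightarrow> a" using convergent_eq_Cauchy convergent_def by blast
  have "Cauchy ys"
    by (rule geo_cauchy[OF _ k0 k1, of _ "D 0"])
       (use Dpow D_def in \<open>smt (verit) zero_le_dist\<close>)
  then obtain b where b: "ys \<longlonglongrightarrow> b" using convergent_eq_Cauchy convergent_def by blast
  have ic: "isCont (\<lambda>(x, y). F x y) p" for p
    using cont continuous_on_eq_continuous_at[of UNIV] by auto
  have "(\<lambda>n. (\<lambda>(x, y). F x y) (xs n, ys n)) \<longlonglongrightarrow> (\<lambda>(x, y). F x y) (a, b)"
    by (rule isCont_tendsto_compose[OF ic tendsto_Pair[OF a b]])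
  hence "(\<lambda>n. xs (Suc n)) \<longlonglongrightarrow> F a b" by (simp add: xsS)
  moreover have "(\<lambda>n. xs (Suc n)) \<longlonglongrightarrow> a" using a by (rule LIMSEQ_Suc)
  ultimately have fa: "F a b = a" using LIMSEQ_unique by blast
  have "(\<lambda>n. (\<lambda>(x, y). F x y) (ys n, xs n)) \<longlonglongrightarrow> (\<lambda>(x, y). F x y) (b, a)"
    by (rule isCont_tendsto_compose[OF ic tendsto_Pair[OF b a]])
  hence "(\<lambda>n. ys (Suc n)) \<longlonglongrightarrow> F b a" by (simp add: ysS)
  moreover have "(\<lambda>n. ys (Suc n)) \<longlonglongrightarrow> b" using b by (rule LIMSEQ_Suc)
  ultimately have fb: "F b a = b" using LIMSEQ_unique by blast
  show ?thesis using fa fb unfolding coupled_fixed_point_def by blast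
qed

end
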